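(* Let $q$ be a prime power and $M\geq 2$ an integer. Let $g\in\mathbb{F}_q[x]$ be a monic irreducible polynomial with $g(0)\neq 0$ and $g\neq g^*$ (so that $f=gg^*$ is a type $2$ polynomial). Then every irreducible factor $h$ of $g(x^M)$ is of type $2$, i.e. satisfies $h\neq h^*$ (it is not self-reciprocal).
   Context: For a monic polynomial $f\in\mathbb{F}_q[x]$ of degree $r$ with $f(0)\neq0$, its dual is $f^*(x)=f(0)^{-1}x^rf(x^{-1})$, and $f$ is self-reciprocal if $f=f^*$. A type $2$ polynomial is one of the form $gg^*$ with $g$ irreducible and $g\neq g^*$. *)

theory Defs
  imports "HOL-Computational_Algebra.Computational_Algebra"
begin

definition dual_poly :: "'a::field poly \<Rightarrow> 'a poly" where
  "dual_poly f = smult (inverse (coeff f 0)) (reflect_poly f)"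

definition self_reciprocal :: "'a::field poly \<Rightarrow> bool" where
  "self_reciprocal f \<longleftrightarrow> f = dual_poly f"

end

theory Submission
  imports Defs
begin

lemma a1: "\<not> n < (M::nat) \<Longrightarrow> M dvd (n - M) \<longleftrightarrow> M dvd n"
proof -
  assume "\<not> n < M" then have "n = (n - M) + M" by simp
  then show ?thesis by (metis dvd_add dvd_refl dvd_diff_nat)
qed
lemma a2: "\<not> n < (M::nat) \<Longrightarrow> 0 < M \<Longrightarrow> n div M = Suc ((n - M) div M)"
proof -
  assume "\<not> n < M" "0 < M" then have "n = (n - M) + M" by simp
  then show ?thesis using \<open>0 < M\<close> by (metis div_add_self2 less_not_refl2 Suc_eq_plus1)
qed
lemma a3: assumes "d * M < (n::nat)" "M dvd n" shows "d < n div M"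
proof (rule ccontr)
  assume "\<not> d < n div M"
  note assms
  have "n div M \<le> d" using \<open>\<not> d < n div M\<close> by simp
  then have "n div M * M \<le> d * M" by (rule mult_le_mono1)
  moreover have "n div M * M = n" using \<open>M dvd n\<close> by simp
  ultimately show False using \<open>d * M < n\<close> by simp
qed
lemma a4: "\<not> d * M < (n::nat) \<Longrightarrow> M dvd (d * M - n) \<longleftrightarrow> M dvd n"
proof -
  assume "\<not> d * M < n" then have "d * M = (d * M - n) + n" by simp
  have "n = d * M - (d * M - n)" using \<open>\<not> d * M < n\<close> by simp
  then show ?thesis by (metis dvd_diff_nat dvd_triv_right)
qed
lemma a5: "\<not> d * M < (n::nat) \<Longrightarrow> 0 < M \<Longrightarrow> M dvd n \<Longrightarrow> (d * M - n) div M = d - n div M \<and> n div M \<le> d"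
proof -
  assume h: "\<not> d * M < n" "0 < M" "M dvd n"
  then obtain k where k: "n = k * M" by (metis dvd_def mult.commute)
  then have "k \<le> d" using h by simp
  moreover have "d * M - n = (d - k) * M" using k by (simp add: diff_mult_distrib)
  ultimately show ?thesis using k h by simp
qed

lemma ideal_min:
  fixes I :: "'a::field poly set"
  assumes sub: "\<And>p q. p \<in> I \<Longrightarrow> q \<in> I \<Longrightarrow> p - q \<in> I"
    and mul: "\<And>p q. p \<in> I \<Longrightarrow> q * p \<in> I"
    and a: "a \<in> I" "a \<noteq> 0"
  shows "\<exists>m\<in>I. m \<noteq> 0 \<and> (\<forall>p\<in>I. m dvd p)"
proof -
  define n where "n = (LEAST n. \<exists>p\<in>I. p \<noteq> 0 \<and> degree p = n)"
  have ex: "\<exists>p\<in>I. p \<noteq> 0 \<and> degree p = n"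
    unfolding n_def by (rule LeastI[of _ "degree a"]) (use a in auto)
  then obtain m where m: "m \<in> I" "m \<noteq> 0" "degree m = n" by blast
  have mn: "\<And>p. p \<in> I \<Longrightarrow> p \<noteq> 0 \<Longrightarrow> n \<le> degree p"
    unfolding n_def by (rule Least_le) blast
  have "\<forall>p\<in>I. m dvd p"
  proof
    fix p assume p: "p \<in> I"
    have "p mod m = p - (p div m) * m" by (simp add: mod_div_mult_eq [symmetric] algebra_simps)
    then have "p mod m \<in> I" using sub[OF p mul[OF m(1)]] by simp
    moreover have "p mod m = 0 \<or> degree (p mod m) < degree m" using m(2) by (rule degree_mod_less)
    ultimately have "p mod m = 0" using mn m(3) by fastforce
    then show "m dvd p" by (simp add: mod_eq_0_iff_dvd)
  qed
  then show ?thesis using m by blast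
qed

lemma coeff_pcomp_monom:
  assumes "0 < M"
  shows "coeff (pcompose p (monom (1::'a::comm_ring_1) M)) n = (if M dvd n then coeff p (n div M) else 0)"
proof (induction p arbitrary: n rule: pCons_induct)
  case 0
  then show ?case by simp
next
  case (pCons a p)
  show ?case
  proof (cases "n < M")
    case True
    then have "M dvd n \<longleftrightarrow> n = 0" using assms by (auto dest: dvd_imp_le)
    then show ?thesis using True
      by (auto simp: pcompose_pCons coeff_monom_mult coeff_pCons split: nat.split)
  next
    case False
    then have n0: "n \<noteq> 0" using assms by auto
    have "coeff (pcompose (pCons a p) (monom 1 M)) n = coeff (pcompose p (monom 1 M)) (n - M)"
      using False n0 by (simp add: pcompose_pCons coeff_monom_mult coeff_pCons split: nat.split)
    also have "\<dots> = (if M dvd (n - M) then coeff p ((n - M) div M) else 0)" by (rule pCons.IH)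
    also have "\<dots> = (if M dvd n then coeff (pCons a p) (n div M) else 0)"
    proof -
      have d: "M dvd (n - M) \<longleftrightarrow> M dvd n" using False by (rule a1)
      have "M dvd n \<Longrightarrow> n div M = Suc ((n - M) div M)" using False assms by (intro a2)
      then show ?thesis using d by (auto simp: coeff_pCons)
    qed
    finally show ?thesis .
  qed
qed

lemma reflect_pcomp_monom:
  fixes p :: "'a::field poly"
  assumes "0 < M"
  shows "reflect_poly (pcompose p (monom 1 M)) = pcompose (reflect_poly p) (monom 1 M)"
proof (rule poly_eqI)
  fix n
  have dg: "degree (pcompose p (monom 1 M)) = degree p * M"
    by (simp add: degree_pcompose degree_monom_eq)
  show "coeff (reflect_poly (pcompose p (monom 1 M))) n = coeff (pcompose (reflect_poly p) (monom 1 M)) n"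
  proof (cases "n > degree p * M")
    case True
    then have "\<not> (M dvd n \<and> n div M \<le> degree p)" using a3[of "degree p" M n] by auto
    then show ?thesis using True dg
      by (auto simp: coeff_reflect_poly coeff_pcomp_monom[OF assms])
  next
    case False
    have d: "M dvd (degree p * M - n) \<longleftrightarrow> M dvd n" using False by (rule a4)
    have e: "M dvd n \<Longrightarrow> (degree p * M - n) div M = degree p - n div M \<and> n div M \<le> degree p"
      using False assms by (intro a5)
    show ?thesis using False dg d e
      by (auto simp: coeff_reflect_poly coeff_pcomp_monom[OF assms])
  qed
qed

theorem lemma4p18:
  fixes g :: "'a::{finite,field} poly" and M :: nat
  assumes "M \<ge> 2"
    and "lead_coeff g = 1" and "irreducible g"
    and "coeff g 0 \<noteq> 0"
    and "\<not> self_reciprocal g"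
  shows "\<forall>h. lead_coeff h = 1 \<and> irreducible h \<and> h dvd pcompose g (monom 1 M)
           \<longrightarrow> \<not> self_reciprocal h"
proof (intro allI impI)
  fix h :: "'a poly"
  assume H: "lead_coeff h = 1 \<and> irreducible h \<and> h dvd pcompose g (monom 1 M)"
  then have irr: "irreducible h" and dv: "h dvd pcompose g (monom 1 M)" by auto
  show "\<not> self_reciprocal h"
  proof
    assume sr: "self_reciprocal h"
    define X :: "'a poly" where "X = monom 1 M"
    have M0: "0 < M" using assms(1) by simp
    define g' where "g' = reflect_poly g"
    have g0: "g \<noteq> 0" using assms(3) by auto
    have ndvd: "\<not> g dvd g'"
    proof
      assume "g dvd g'"
      then obtain k where k: "g' = g * k" by (auto elim: dvdE)
      have dg': "degree g' = degree g" using assms(4) by (simp add: g'_def)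
      have "g' \<noteq> 0" using g0 by (simp add: g'_def)
      then have k0: "k \<noteq> 0" using k by auto
      have "degree g' = degree g + degree k" using k g0 k0 by (simp add: degree_mult_eq)
      then have "degree k = 0" using dg' by simp
      then have kc: "k = [:coeff k 0:]" using degree_0_id by metis
      have "lead_coeff g' = coeff g 0" using dg' by (simp add: g'_def coeff_reflect_poly)
      moreover have "lead_coeff g' = coeff k 0" using k kc assms(2)
        by (metis lead_coeff_mult lead_coeff_pCons(2) mult_1 pCons_0_0 mult_zero_left)
      ultimately have kk: "coeff k 0 = coeff g 0" by simp
      have "g' = g * [:coeff g 0:]" using k kc kk by metis
      then have "g' = smult (coeff g 0) g" by simp
      then have "dual_poly g = smult (inverse (coeff g 0)) (smult (coeff g 0) g)"
        unfolding dual_poly_def g'_def[symmetric] by simp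
      also have "\<dots> = g" using assms(4) by simp
      finally show False using assms(5) unfolding self_reciprocal_def by simp
    qed
    have "coprime g g'"
    proof (rule coprimeI)
      fix d assume d1: "d dvd g" and d2: "d dvd g'"
      from d1 obtain e where e: "g = d * e" by (auto elim: dvdE)
      have "is_unit d \<or> is_unit e" using assms(3) e by (rule irreducibleD)
      moreover have "\<not> is_unit e"
      proof
        assume "is_unit e"
        then have "g dvd d" using e by (metis dvd_mult_unit_iff dvd_refl)
        then show False using d2 ndvd dvd_trans by blast
      qed
      ultimately show "is_unit d" by blast
    qed
    define c where "c = coeff h 0"
    have h0: "h \<noteq> 0" using irr by auto
    have hs: "h = smult (inverse c) (reflect_poly h)"
      using sr unfolding self_reciprocal_def dual_poly_def c_def by simp
    have c0: "c \<noteq> 0" using h0 hs by auto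
    have rh: "reflect_poly h = smult c h"
      using hs c0 by (metis smult_smult right_inverse smult_1_left)
    obtain k where k: "pcompose g X = h * k" using dv X_def by (auto elim: dvdE)
    have "reflect_poly (pcompose g X) = h * smult c (reflect_poly k)"
      using k rh by (simp add: reflect_poly_mult)
    then have d2: "h dvd reflect_poly (pcompose g X)" by (metis dvd_triv_left)
    define I where "I = {p. h dvd pcompose p X}"
    have gI: "g \<in> I" using dv X_def I_def by simp
    have g'I: "g' \<in> I" using d2 I_def by (simp add: g'_def X_def reflect_pcomp_monom[OF M0])
    obtain m where m: "m \<in> I" "m \<noteq> 0" "\<forall>p\<in>I. m dvd p"
      using ideal_min[of I g] gI g0 unfolding I_def
      by (auto simp: pcompose_diff pcompose_mult)
    from m(3) gI obtain e where e: "g = m * e" by (auto elim: dvdE)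
    have "is_unit m \<or> is_unit e" using assms(3) e by (rule irreducibleD)
    moreover have "\<not> is_unit e"
    proof
      assume "is_unit e"
      then have "g dvd m" using e by (metis dvd_mult_unit_iff dvd_refl)
      then show False using m(3) g'I ndvd dvd_trans by blast
    qed
    ultimately have "is_unit m" by blast
    then obtain w where w: "1 = m * w" by (auto elim: dvdE)
    have "w * m \<in> I" using m(1) unfolding I_def by (simp add: pcompose_mult)
    then have "h dvd 1" using w unfolding I_def by (simp add: mult.commute pcompose_1)
    then show False using irr irreducible_not_unit by blast
  qed
qed

end
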